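(* $F_v(K_{1,1,2},K_{1,2,2};4)\le 26$; that is, there exists a $K_4$-free graph $H$ on 26 vertices such that for every partition $V(H)=R\cup B$, the subgraph induced by $R$ contains $K_{1,1,2}$ or the subgraph induced by $B$ contains $K_{1,2,2}$.
   Context: All graphs are finite and simple. $K_{p,q,s}$ is the complete tripartite graph with parts of sizes $p,q,s$ (so $K_{1,1,2}$ is $K_4$ minus an edge). "Contains" means has a (not necessarily induced) subgraph isomorphic to. $F_v(H_1,H_2;k)$ is the minimum number of vertices of a $K_k$-free graph $G$ such that for every partition $V(G)=X_1\cup X_2$ there is $i$ with the subgraph induced by $X_i$ containing $H_i$. *)

theory Defs
  imports Main
begin

definition simple_graph :: "'a set \<Rightarrow> ('a \<Rightarrow> 'a \<Rightarrow> bool) \<Rightarrow> bool" where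
  "simple_graph V E \<longleftrightarrow> finite V \<and> (\<forall>u v. E u v \<longrightarrow> E v u) \<and> (\<forall>v. \<not> E v v)
     \<and> (\<forall>u v. E u v \<longrightarrow> u \<in> V \<and> v \<in> V)"

definition contains_on :: "('a \<Rightarrow> 'a \<Rightarrow> bool) \<Rightarrow> 'a set \<Rightarrow> 'b set \<Rightarrow> ('b \<Rightarrow> 'b \<Rightarrow> bool) \<Rightarrow> bool" where
  "contains_on E S HV HE \<longleftrightarrow>
     (\<exists>f. inj_on f HV \<and> f ` HV \<subseteq> S \<and> (\<forall>u\<in>HV. \<forall>v\<in>HV. HE u v \<longrightarrow> E (f u) (f v)))"

definition complete_V :: "nat \<Rightarrow> nat set" where
  "complete_V k = {0..<k}"
definition complete_E :: "nat \<Rightarrow> nat \<Rightarrow> bool" where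
  "complete_E u v \<longleftrightarrow> u \<noteq> v"

definition tri_part :: "nat \<Rightarrow> nat \<Rightarrow> nat \<Rightarrow> nat" where
  "tri_part p q i = (if i < p then 0 else if i < p + q then 1 else 2)"
definition tripartite_V :: "nat \<Rightarrow> nat \<Rightarrow> nat \<Rightarrow> nat set" where
  "tripartite_V p q s = {0..<p+q+s}"
definition tripartite_E :: "nat \<Rightarrow> nat \<Rightarrow> nat \<Rightarrow> nat \<Rightarrow> nat \<Rightarrow> bool" where
  "tripartite_E p q s u v \<longleftrightarrow> tri_part p q u \<noteq> tri_part p q v"

definition Kk_free :: "nat \<Rightarrow> 'a set \<Rightarrow> ('a \<Rightarrow> 'a \<Rightarrow> bool) \<Rightarrow> bool" where
  "Kk_free k V E \<longleftrightarrow> \<not> contains_on E V (complete_V k) complete_E"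

end

theory Submission
  imports Defs
begin

definition adjl :: "nat list list" where
  "adjl = [[4,6,10,11,12,13,16,17,19,23,24,25],
 [2,4,6,8,10,11,13,15,17,19,21,23,24],
 [1,3,4,6,9,11,12,14,16,17,19,22,24,25],
 [2,4,6,8,10,12,13,15,17,19,21,23,25],
 [0,1,2,3,5,7,8,13,14,15,16,18,20,21],
 [4,6,8,9,11,12,14,16,17,19,21,22,24],
 [0,1,2,3,5,7,9,10,14,15,16,18,20,22,23],
 [4,6,8,10,11,13,16,17,19,21,22,23,24],
 [1,3,4,5,7,9,11,17,18,20,22,23,24,25],
 [2,5,6,8,10,12,13,15,18,19,21,23,25],
 [0,1,3,6,7,9,11,13,14,19,20,24],
 [0,1,2,5,7,8,10,12,14,15,18,20,21,25],
 [0,2,3,5,9,11,13,15,16,18,20,22,24],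
 [0,1,3,4,7,9,10,12,14,17,20,22,23,25],
 [2,4,5,6,10,11,13,15,17,18,19,23,24],
 [1,3,4,6,9,11,12,14,16,17,19,22,24,25],
 [0,2,4,5,6,7,12,15,17,18,19,20,25],
 [0,1,2,3,5,7,8,13,14,15,16,18,20,21],
 [4,6,8,9,11,12,14,16,17,19,21,22,24],
 [0,1,2,3,5,7,9,10,14,15,16,18,20,22,23],
 [4,6,8,10,11,12,13,16,17,19,21,23,24],
 [1,3,4,5,7,9,11,17,18,20,22,23,24,25],
 [2,5,6,7,8,12,13,15,18,19,21,25],
 [0,1,3,6,7,8,9,13,14,19,20,21],
 [0,1,2,5,7,8,10,12,14,15,18,20,21,25],
 [0,2,3,8,9,11,13,15,16,21,22,24]]"

definition nb :: "nat \<Rightarrow> nat list" where "nb u = adjl ! u"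

lemma nb_0[simp]: "nb 0 = [4,6,10,11,12,13,16,17,19,23,24,25]" by (simp add: nb_def adjl_def)
lemma nb_1[simp]: "nb 1 = [2,4,6,8,10,11,13,15,17,19,21,23,24]" by (simp add: nb_def adjl_def)
lemma nb_Suc0[simp]: "nb (Suc 0) = [2,4,6,8,10,11,13,15,17,19,21,23,24]" by (simp add: nb_def adjl_def)
lemma nb_2[simp]: "nb 2 = [1,3,4,6,9,11,12,14,16,17,19,22,24,25]" by (simp add: nb_def adjl_def)
lemma nb_3[simp]: "nb 3 = [2,4,6,8,10,12,13,15,17,19,21,23,25]" by (simp add: nb_def adjl_def)
lemma nb_4[simp]: "nb 4 = [0,1,2,3,5,7,8,13,14,15,16,18,20,21]" by (simp add: nb_def adjl_def)
lemma nb_5[simp]: "nb 5 = [4,6,8,9,11,12,14,16,17,19,21,22,24]" by (simp add: nb_def adjl_def)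
lemma nb_6[simp]: "nb 6 = [0,1,2,3,5,7,9,10,14,15,16,18,20,22,23]" by (simp add: nb_def adjl_def)
lemma nb_7[simp]: "nb 7 = [4,6,8,10,11,13,16,17,19,21,22,23,24]" by (simp add: nb_def adjl_def)
lemma nb_8[simp]: "nb 8 = [1,3,4,5,7,9,11,17,18,20,22,23,24,25]" by (simp add: nb_def adjl_def)
lemma nb_9[simp]: "nb 9 = [2,5,6,8,10,12,13,15,18,19,21,23,25]" by (simp add: nb_def adjl_def)
lemma nb_10[simp]: "nb 10 = [0,1,3,6,7,9,11,13,14,19,20,24]" by (simp add: nb_def adjl_def)
lemma nb_11[simp]: "nb 11 = [0,1,2,5,7,8,10,12,14,15,18,20,21,25]" by (simp add: nb_def adjl_def)
lemma nb_12[simp]: "nb 12 = [0,2,3,5,9,11,13,15,16,18,20,22,24]" by (simp add: nb_def adjl_def)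
lemma nb_13[simp]: "nb 13 = [0,1,3,4,7,9,10,12,14,17,20,22,23,25]" by (simp add: nb_def adjl_def)
lemma nb_14[simp]: "nb 14 = [2,4,5,6,10,11,13,15,17,18,19,23,24]" by (simp add: nb_def adjl_def)
lemma nb_15[simp]: "nb 15 = [1,3,4,6,9,11,12,14,16,17,19,22,24,25]" by (simp add: nb_def adjl_def)
lemma nb_16[simp]: "nb 16 = [0,2,4,5,6,7,12,15,17,18,19,20,25]" by (simp add: nb_def adjl_def)
lemma nb_17[simp]: "nb 17 = [0,1,2,3,5,7,8,13,14,15,16,18,20,21]" by (simp add: nb_def adjl_def)
lemma nb_18[simp]: "nb 18 = [4,6,8,9,11,12,14,16,17,19,21,22,24]" by (simp add: nb_def adjl_def)
lemma nb_19[simp]: "nb 19 = [0,1,2,3,5,7,9,10,14,15,16,18,20,22,23]" by (simp add: nb_def adjl_def)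
lemma nb_20[simp]: "nb 20 = [4,6,8,10,11,12,13,16,17,19,21,23,24]" by (simp add: nb_def adjl_def)
lemma nb_21[simp]: "nb 21 = [1,3,4,5,7,9,11,17,18,20,22,23,24,25]" by (simp add: nb_def adjl_def)
lemma nb_22[simp]: "nb 22 = [2,5,6,7,8,12,13,15,18,19,21,25]" by (simp add: nb_def adjl_def)
lemma nb_23[simp]: "nb 23 = [0,1,3,6,7,8,9,13,14,19,20,21]" by (simp add: nb_def adjl_def)
lemma nb_24[simp]: "nb 24 = [0,1,2,5,7,8,10,12,14,15,18,20,21,25]" by (simp add: nb_def adjl_def)
lemma nb_25[simp]: "nb 25 = [0,2,3,8,9,11,13,15,16,21,22,24]" by (simp add: nb_def adjl_def)

definition GE :: "nat \<Rightarrow> nat \<Rightarrow> bool" where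
  "GE u v \<longleftrightarrow> u < 26 \<and> v < 26 \<and> v \<in> set (nb u)"

lemma lt26: "(u::nat) < 26 \<longleftrightarrow> u \<in> set [0..<26]" by simp

lemma upt26: "[0..<26] = [0,1,2,3,4,5,6,7,8,9,10,11,12,13,14,15,16,17,18,19,20,21,22,23,24,25]" by (simp add: upt_rec numeral_eq_Suc)

lemma all26: "(\<forall>u<(26::nat). P u) \<longleftrightarrow> list_all P [0..<26]"
  by (auto simp: list_all_iff)

lemma symcheck: "\<forall>u<(26::nat). \<forall>v\<in>set (nb u). v < 26 \<and> v \<noteq> u \<and> u \<in> set (nb v)"
  unfolding all26 upt26 by simp

lemma GE_sym: "GE u v \<Longrightarrow> GE v u"
  using symcheck unfolding GE_def by blast

lemma GE_irr: "\<not> GE v v"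
  using symcheck unfolding GE_def by blast

lemma GE_V: "GE u v \<Longrightarrow> u < 26 \<and> v < 26"
  unfolding GE_def by simp

definition common :: "nat \<Rightarrow> nat \<Rightarrow> nat list" where
  "common u v = filter (\<lambda>w. w \<in> set (nb v)) (nb u)"

lemma nok4_0: "\<forall>v\<in>set (nb 0). \<forall>w\<in>set (common 0 v). \<forall>x\<in>set (common 0 v). x \<notin> set (nb w)"
  by (simp add: common_def)
lemma nok4_1: "\<forall>v\<in>set (nb 1). \<forall>w\<in>set (common 1 v). \<forall>x\<in>set (common 1 v). x \<notin> set (nb w)"
  by (simp add: common_def)
lemma nok4_2: "\<forall>v\<in>set (nb 2). \<forall>w\<in>set (common 2 v). \<forall>x\<in>set (common 2 v). x \<notin> set (nb w)"
  by (simp add: common_def)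
lemma nok4_3: "\<forall>v\<in>set (nb 3). \<forall>w\<in>set (common 3 v). \<forall>x\<in>set (common 3 v). x \<notin> set (nb w)"
  by (simp add: common_def)
lemma nok4_4: "\<forall>v\<in>set (nb 4). \<forall>w\<in>set (common 4 v). \<forall>x\<in>set (common 4 v). x \<notin> set (nb w)"
  by (simp add: common_def)
lemma nok4_5: "\<forall>v\<in>set (nb 5). \<forall>w\<in>set (common 5 v). \<forall>x\<in>set (common 5 v). x \<notin> set (nb w)"
  by (simp add: common_def)
lemma nok4_6: "\<forall>v\<in>set (nb 6). \<forall>w\<in>set (common 6 v). \<forall>x\<in>set (common 6 v). x \<notin> set (nb w)"
  by (simp add: common_def)
lemma nok4_7: "\<forall>v\<in>set (nb 7). \<forall>w\<in>set (common 7 v). \<forall>x\<in>set (common 7 v). x \<notin> set (nb w)"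
  by (simp add: common_def)
lemma nok4_8: "\<forall>v\<in>set (nb 8). \<forall>w\<in>set (common 8 v). \<forall>x\<in>set (common 8 v). x \<notin> set (nb w)"
  by (simp add: common_def)
lemma nok4_9: "\<forall>v\<in>set (nb 9). \<forall>w\<in>set (common 9 v). \<forall>x\<in>set (common 9 v). x \<notin> set (nb w)"
  by (simp add: common_def)
lemma nok4_10: "\<forall>v\<in>set (nb 10). \<forall>w\<in>set (common 10 v). \<forall>x\<in>set (common 10 v). x \<notin> set (nb w)"
  by (simp add: common_def)
lemma nok4_11: "\<forall>v\<in>set (nb 11). \<forall>w\<in>set (common 11 v). \<forall>x\<in>set (common 11 v). x \<notin> set (nb w)"
  by (simp add: common_def)
lemma nok4_12: "\<forall>v\<in>set (nb 12). \<forall>w\<in>set (common 12 v). \<forall>x\<in>set (common 12 v). x \<notin> set (nb w)"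
  by (simp add: common_def)
lemma nok4_13: "\<forall>v\<in>set (nb 13). \<forall>w\<in>set (common 13 v). \<forall>x\<in>set (common 13 v). x \<notin> set (nb w)"
  by (simp add: common_def)
lemma nok4_14: "\<forall>v\<in>set (nb 14). \<forall>w\<in>set (common 14 v). \<forall>x\<in>set (common 14 v). x \<notin> set (nb w)"
  by (simp add: common_def)
lemma nok4_15: "\<forall>v\<in>set (nb 15). \<forall>w\<in>set (common 15 v). \<forall>x\<in>set (common 15 v). x \<notin> set (nb w)"
  by (simp add: common_def)
lemma nok4_16: "\<forall>v\<in>set (nb 16). \<forall>w\<in>set (common 16 v). \<forall>x\<in>set (common 16 v). x \<notin> set (nb w)"
  by (simp add: common_def)
lemma nok4_17: "\<forall>v\<in>set (nb 17). \<forall>w\<in>set (common 17 v). \<forall>x\<in>set (common 17 v). x \<notin> set (nb w)"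
  by (simp add: common_def)
lemma nok4_18: "\<forall>v\<in>set (nb 18). \<forall>w\<in>set (common 18 v). \<forall>x\<in>set (common 18 v). x \<notin> set (nb w)"
  by (simp add: common_def)
lemma nok4_19: "\<forall>v\<in>set (nb 19). \<forall>w\<in>set (common 19 v). \<forall>x\<in>set (common 19 v). x \<notin> set (nb w)"
  by (simp add: common_def)
lemma nok4_20: "\<forall>v\<in>set (nb 20). \<forall>w\<in>set (common 20 v). \<forall>x\<in>set (common 20 v). x \<notin> set (nb w)"
  by (simp add: common_def)
lemma nok4_21: "\<forall>v\<in>set (nb 21). \<forall>w\<in>set (common 21 v). \<forall>x\<in>set (common 21 v). x \<notin> set (nb w)"
  by (simp add: common_def)
lemma nok4_22: "\<forall>v\<in>set (nb 22). \<forall>w\<in>set (common 22 v). \<forall>x\<in>set (common 22 v). x \<notin> set (nb w)"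
  by (simp add: common_def)
lemma nok4_23: "\<forall>v\<in>set (nb 23). \<forall>w\<in>set (common 23 v). \<forall>x\<in>set (common 23 v). x \<notin> set (nb w)"
  by (simp add: common_def)
lemma nok4_24: "\<forall>v\<in>set (nb 24). \<forall>w\<in>set (common 24 v). \<forall>x\<in>set (common 24 v). x \<notin> set (nb w)"
  by (simp add: common_def)
lemma nok4_25: "\<forall>v\<in>set (nb 25). \<forall>w\<in>set (common 25 v). \<forall>x\<in>set (common 25 v). x \<notin> set (nb w)"
  by (simp add: common_def)

lemma nok4_all: "list_all (\<lambda>u. \<forall>v\<in>set (nb u). \<forall>w\<in>set (common u v). \<forall>x\<in>set (common u v). x \<notin> set (nb w)) [0..<26]"
  unfolding upt26 list.pred_inject by (intro conjI; ((rule nok4_0 nok4_1 nok4_2 nok4_3 nok4_4 nok4_5 nok4_6 nok4_7 nok4_8 nok4_9 nok4_10 nok4_11 nok4_12 nok4_13 nok4_14 nok4_15 nok4_16 nok4_17 nok4_18 nok4_19 nok4_20 nok4_21 nok4_22 nok4_23 nok4_24 nok4_25) | simp))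

lemma nok4: "u < 26 \<Longrightarrow> \<forall>v\<in>set (nb u). \<forall>w\<in>set (common u v). \<forall>x\<in>set (common u v). x \<notin> set (nb w)"
  using nok4_all unfolding all26[symmetric] by blast

lemma no_K4:
  assumes "GE a b" "GE a c" "GE a d" "GE b c" "GE b d" "GE c d" shows False
proof -
  have a: "a < 26" using GE_V assms(1) by blast
  have h: "b \<in> set (nb a)" "c \<in> set (nb a)" "d \<in> set (nb a)" "c \<in> set (nb b)" "d \<in> set (nb b)" "d \<in> set (nb c)"
    using assms unfolding GE_def by simp_all
  have "c \<in> set (common a b)" "d \<in> set (common a b)" unfolding common_def using h by simp_all
  then show False using nok4[OF a] h(1) h(6) by blast
qed

definition validR :: "nat list \<Rightarrow> bool" where
  "validR cl \<longleftrightarrow> length cl = 4 \<and> distinct cl \<and> GE (cl!0) (cl!1) \<and> GE (cl!0) (cl!2) \<and>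
     GE (cl!0) (cl!3) \<and> GE (cl!1) (cl!2) \<and> GE (cl!1) (cl!3)"

definition validB :: "nat list \<Rightarrow> bool" where
  "validB cl \<longleftrightarrow> length cl = 5 \<and> distinct cl \<and> GE (cl!0) (cl!1) \<and> GE (cl!0) (cl!2) \<and>
     GE (cl!0) (cl!3) \<and> GE (cl!0) (cl!4) \<and> GE (cl!1) (cl!3) \<and> GE (cl!1) (cl!4) \<and>
     GE (cl!2) (cl!3) \<and> GE (cl!2) (cl!4)"

lemma tri112: "tripartite_V 1 1 2 = {0,1,2,3}" by (auto simp: tripartite_V_def)
lemma tri122: "tripartite_V 1 2 2 = {0,1,2,3,4}" by (auto simp: tripartite_V_def)

lemma validR_contains:
  assumes "validR cl" "set cl \<subseteq> R"
  shows "contains_on GE R (tripartite_V 1 1 2) (tripartite_E 1 1 2)"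
proof -
  from assms(1) have l: "length cl = 4" and d: "distinct cl" by (auto simp: validR_def)
  have inj: "inj_on (\<lambda>i. cl ! i) (tripartite_V 1 1 2)"
    unfolding inj_on_def tripartite_V_def using d l by (simp add: nth_eq_iff_index_eq)
  have im: "(\<lambda>i. cl ! i) ` tripartite_V 1 1 2 \<subseteq> R"
    using assms(2) l nth_mem by (fastforce simp: tripartite_V_def)
  have ed: "\<forall>u\<in>tripartite_V 1 1 2. \<forall>v\<in>tripartite_V 1 1 2. tripartite_E 1 1 2 u v \<longrightarrow> GE (cl!u) (cl!v)"
  proof (intro ballI impI)
    fix u v assume uv: "u \<in> tripartite_V 1 1 2" "v \<in> tripartite_V 1 1 2" "tripartite_E 1 1 2 u v"
    have g: "GE (cl!0) (cl!1)" "GE (cl!1) (cl!0)" "GE (cl!0) (cl!2)" "GE (cl!2) (cl!0)" "GE (cl!0) (cl!3)" "GE (cl!3) (cl!0)" "GE (cl!1) (cl!2)" "GE (cl!2) (cl!1)" "GE (cl!1) (cl!3)" "GE (cl!3) (cl!1)" using assms(1) GE_sym unfolding validR_def by blast+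
    from uv have "u < 4" "v < 4" by (auto simp: tripartite_V_def)
    then have "u = 0 \<or> u = 1 \<or> u = 2 \<or> u = 3" "v = 0 \<or> v = 1 \<or> v = 2 \<or> v = 3" by auto
    then show "GE (cl!u) (cl!v)" using uv(3) g by (elim disjE) (simp_all add: tripartite_E_def tri_part_def)
  qed
  show ?thesis unfolding contains_on_def using inj im ed by blast
qed

lemma validB_contains:
  assumes "validB cl" "set cl \<subseteq> R"
  shows "contains_on GE R (tripartite_V 1 2 2) (tripartite_E 1 2 2)"
proof -
  from assms(1) have l: "length cl = 5" and d: "distinct cl" by (auto simp: validB_def)
  have inj: "inj_on (\<lambda>i. cl ! i) (tripartite_V 1 2 2)"
    unfolding inj_on_def tripartite_V_def using d l by (simp add: nth_eq_iff_index_eq)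
  have im: "(\<lambda>i. cl ! i) ` tripartite_V 1 2 2 \<subseteq> R"
    using assms(2) l nth_mem by (fastforce simp: tripartite_V_def)
  have ed: "\<forall>u\<in>tripartite_V 1 2 2. \<forall>v\<in>tripartite_V 1 2 2. tripartite_E 1 2 2 u v \<longrightarrow> GE (cl!u) (cl!v)"
  proof (intro ballI impI)
    fix u v assume uv: "u \<in> tripartite_V 1 2 2" "v \<in> tripartite_V 1 2 2" "tripartite_E 1 2 2 u v"
    have g: "GE (cl!0) (cl!1)" "GE (cl!1) (cl!0)" "GE (cl!0) (cl!2)" "GE (cl!2) (cl!0)" "GE (cl!0) (cl!3)" "GE (cl!3) (cl!0)" "GE (cl!0) (cl!4)" "GE (cl!4) (cl!0)" "GE (cl!1) (cl!3)" "GE (cl!3) (cl!1)" "GE (cl!1) (cl!4)" "GE (cl!4) (cl!1)" "GE (cl!2) (cl!3)" "GE (cl!3) (cl!2)" "GE (cl!2) (cl!4)" "GE (cl!4) (cl!2)" using assms(1) GE_sym unfolding validB_def by blast+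
    from uv have "u < 5" "v < 5" by (auto simp: tripartite_V_def)
    then have "u = 0 \<or> u = 1 \<or> u = 2 \<or> u = 3 \<or> u = 4" "v = 0 \<or> v = 1 \<or> v = 2 \<or> v = 3 \<or> v = 4" by auto
    then show "GE (cl!u) (cl!v)" using uv(3) g by (elim disjE) (simp_all add: tripartite_E_def tri_part_def)
  qed
  show ?thesis unfolding contains_on_def using inj im ed by blast
qed

datatype ctree = LR "nat list" | LB "nat list" | Nd nat ctree ctree

fun check :: "(nat \<times> bool) list \<Rightarrow> ctree \<Rightarrow> bool" where
  "check p (LR cl) = (validR cl \<and> list_all (\<lambda>x. (x, True) \<in> set p) cl)"
| "check p (LB cl) = (validB cl \<and> list_all (\<lambda>x. (x, False) \<in> set p) cl)"
| "check p (Nd v t1 t2) = (check ((v, True) # p) t1 \<and> check ((v, False) # p) t2)"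

lemma validR_V: "validR cl \<Longrightarrow> x \<in> set cl \<Longrightarrow> x < 26"
  unfolding validR_def by (auto simp: in_set_conv_nth less_Suc_eq numeral_eq_Suc dest!: GE_V)

lemma validB_V: "validB cl \<Longrightarrow> x \<in> set cl \<Longrightarrow> x < 26"
  unfolding validB_def by (auto simp: in_set_conv_nth less_Suc_eq numeral_eq_Suc dest!: GE_V)

lemma check_sound:
  assumes "check p t" "\<forall>(x, b)\<in>set p. (x \<in> R \<longleftrightarrow> b)" "R \<union> B = {0..<26}" "R \<inter> B = {}"
  shows "contains_on GE R (tripartite_V 1 1 2) (tripartite_E 1 1 2) \<or>
         contains_on GE B (tripartite_V 1 2 2) (tripartite_E 1 2 2)"
  using assms(1,2)
proof (induction t arbitrary: p)
  case (LR cl)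
  then have "validR cl" "set cl \<subseteq> R" by (auto simp: list_all_iff)
  then show ?case using validR_contains by blast
next
  case (LB cl)
  then have v: "validB cl" and nr: "\<forall>x\<in>set cl. x \<notin> R" by (auto simp: list_all_iff)
  have "set cl \<subseteq> B"
  proof
    fix x assume x: "x \<in> set cl"
    then have "x < 26" using validB_V v by blast
    then show "x \<in> B" using nr x assms(3) by auto
  qed
  then show ?case using validB_contains v by blast
next
  case (Nd v t1 t2)
  show ?case
  proof (cases "v \<in> R")
    case True
    then show ?thesis using Nd.IH(1)[of "(v, True) # p"] Nd.prems by auto
  next
    case False
    then show ?thesis using Nd.IH(2)[of "(v, False) # p"] Nd.prems by auto
  qed
qed


definition cert0 :: ctree where "cert0 = (Nd 7 (LR [6,16,2,7]) (Nd 5 (LR [6,16,2,5]) (Nd 14 (LR [2,6,14,16]) (Nd 4 (LR [2,16,4,6]) (Nd 18 (LR [6,16,2,18]) (Nd 9 (LR [2,6,9,16]) (Nd 22 (LR [2,6,16,22]) (Nd 20 (LR [6,16,2,20]) (Nd 12 (LR [2,16,6,12]) (LB [12,5,18,9,22]))))))))))"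
lemma cert0_ok: "check [(2,True),(16,True),(6,True)] cert0" unfolding cert0_def by (simp add: validR_def validB_def GE_def)
definition cert1 :: ctree where "cert1 = (Nd 7 (LR [6,16,7,15]) (Nd 1 (LR [6,15,1,16]) (Nd 22 (LR [6,15,16,22]) (Nd 12 (LR [15,16,6,12]) (Nd 25 (LR [15,16,6,25]) (Nd 4 (LR [15,16,4,6]) (Nd 0 (LR [6,16,0,15]) (Nd 9 (LR [6,15,9,16]) (LB [2,9,22,12,25])))))))))"
lemma cert1_ok: "check [(15,True),(2,False),(16,True),(6,True)] cert1" unfolding cert1_def by (simp add: validR_def validB_def GE_def)
definition cert2 :: ctree where "cert2 = (LR [16,20,6,19])"
lemma cert2_ok: "check [(20,True),(19,True),(15,False),(2,False),(16,True),(6,True)] cert2" unfolding cert2_def by (simp add: validR_def validB_def GE_def)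
definition cert3 :: ctree where "cert3 = (LR [0,16,6,19])"
lemma cert3_ok: "check [(0,True),(20,False),(19,True),(15,False),(2,False),(16,True),(6,True)] cert3" unfolding cert3_def by (simp add: validR_def validB_def GE_def)
definition cert4 :: ctree where "cert4 = (LR [16,18,6,19])"
lemma cert4_ok: "check [(18,True),(0,False),(20,False),(19,True),(15,False),(2,False),(16,True),(6,True)] cert4" unfolding cert4_def by (simp add: validR_def validB_def GE_def)
definition cert5 :: ctree where "cert5 = (LR [5,16,6,19])"
lemma cert5_ok: "check [(5,True),(18,False),(0,False),(20,False),(19,True),(15,False),(2,False),(16,True),(6,True)] cert5" unfolding cert5_def by (simp add: validR_def validB_def GE_def)
definition cert6 :: ctree where "cert6 = (LR [7,16,6,19])"
lemma cert6_ok: "check [(7,True),(5,False),(18,False),(0,False),(20,False),(19,True),(15,False),(2,False),(16,True),(6,True)] cert6" unfolding cert6_def by (simp add: validR_def validB_def GE_def)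
definition cert7 :: ctree where "cert7 = (Nd 8 (Nd 1 (Nd 10 (LR [1,11,8,10]) (Nd 23 (LR [1,23,6,19]) (Nd 25 (LR [8,11,1,25]) (Nd 17 (LR [1,8,11,17]) (Nd 4 (LR [1,8,4,11]) (Nd 24 (LR [1,8,11,24]) (Nd 21 (LR [1,11,8,21]) (LB [21,4,24,5,7])))))))) (Nd 13 (Nd 3 (Nd 23 (LR [3,23,6,8]) (Nd 4 (LR [3,4,8,13]) (Nd 17 (LR [3,17,8,13]) (LB [1,2,15,4,17])))) (Nd 17 (Nd 4 (Nd 14 (LR [13,14,4,17]) (Nd 24 (Nd 25 (LR [8,25,11,24]) (Nd 22 (Nd 12 (Nd 9 (LR [12,13,9,22]) (LB [25,2,15,3,9])) (LB [3,2,15,12,25])) (LB [25,2,15,3,22]))) (LB [24,1,14,2,15]))) (LB [4,1,3,2,15])) (LB [17,1,3,2,15]))) (Nd 4 (Nd 17 (Nd 3 (LR [3,8,4,17]) (Nd 12 (Nd 23 (Nd 9 (LR [9,23,6,19]) (Nd 14 (LR [14,23,6,19]) (Nd 24 (Nd 25 (LR [8,25,11,24]) (LB [25,2,13,3,9])) (LB [24,1,14,2,15])))) (Nd 10 (Nd 14 (LR [10,14,6,11]) (Nd 9 (LR [9,10,6,19]) (Nd 25 (Nd 21 (LR [11,25,8,21]) (LB [23,7,9,13,21])) (LB [13,3,9,23,25])))) (LB [13,0,3,10,23]))) (Nd 22 (Nd 25 (LR [8,25,11,22]) (LB [3,2,15,12,25])) (LB [12,2,13,3,22])))) (Nd 3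 (Nd 23 (LR [3,8,4,23]) (LB [13,0,1,17,23])) (LB [17,1,3,2,13]))) (Nd 21 (Nd 25 (LR [11,25,8,21]) (Nd 10 (Nd 14 (LR [10,14,6,11]) (LB [4,1,14,13,15])) (LB [13,0,7,4,10]))) (LB [4,1,7,13,21]))))) (Nd 24 (Nd 21 (Nd 1 (LR [1,21,11,24]) (Nd 25 (LR [21,25,11,24]) (Nd 4 (Nd 3 (Nd 17 (LR [3,21,4,17]) (Nd 23 (LR [3,23,6,21]) (LB [8,1,7,17,23]))) (Nd 17 (Nd 22 (Nd 12 (Nd 9 (Nd 10 (LR [9,10,6,19]) (Nd 23 (LR [9,23,6,19]) (Nd 13 (LR [12,13,9,22]) (LB [13,0,3,10,23])))) (LB [25,2,8,3,9])) (LB [3,2,15,12,25])) (LB [25,2,15,3,22])) (LB [17,1,3,8,15]))) (Nd 13 (Nd 17 (Nd 3 (LR [3,17,13,21]) (LB [4,1,3,2,8])) (LB [8,4,17,7,20])) (LB [4,1,20,8,13]))))) (Nd 17 (Nd 4 (Nd 22 (Nd 23 (Nd 1 (LR [1,23,6,19]) (Nd 3 (LR [3,23,6,19]) (Nd 9 (LR [9,23,6,19]) (LB [9,5,18,8,21])))) (LB [23,7,20,8,21])) (LB [22,5,18,8,21])) (LB [4,7,18,8,21])) (LB [17,7,20,8,21]))) (Nd 14 (Nd 10 (LR [10,14,6,11]) (LB [24,7,20,8,10])) (LB [24,5,18,8,14]))))"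
lemma cert7_ok: "check [(11,True),(7,False),(5,False),(18,False),(0,False),(20,False),(19,True),(15,False),(2,False),(16,True),(6,True)] cert7" unfolding cert7_def by (simp add: validR_def validB_def GE_def)
definition cert8 :: ctree where "cert8 = (Nd 24 (Nd 8 (Nd 21 (Nd 1 (LR [1,24,8,21]) (Nd 25 (LR [24,25,8,21]) (LB [11,1,25,2,15]))) (Nd 12 (Nd 17 (Nd 1 (LR [1,8,17,24]) (Nd 10 (Nd 9 (LR [9,10,6,19]) (LB [21,5,18,9,11])) (LB [11,1,20,10,21]))) (LB [21,5,20,11,17])) (LB [11,5,20,12,21]))) (Nd 17 (Nd 12 (Nd 4 (Nd 22 (Nd 23 (Nd 1 (LR [1,23,6,19]) (Nd 3 (LR [3,23,6,19]) (Nd 9 (LR [9,23,6,19]) (LB [8,5,18,9,11])))) (LB [8,7,20,11,23])) (LB [8,5,18,11,22])) (LB [8,4,11,5,20])) (LB [11,8,12,18,20])) (LB [8,5,20,11,17]))) (Nd 12 (Nd 25 (Nd 21 (Nd 14 (Nd 10 (LR [10,14,6,19]) (LB [10,0,7,11,24])) (LB [14,5,18,11,24])) (LB [21,5,20,11,24])) (LB [25,0,2,11,24])) (LB [12,5,20,11,24])))"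
lemma cert8_ok: "check [(11,False),(7,False),(5,False),(18,False),(0,False),(20,False),(19,True),(15,False),(2,False),(16,True),(6,True)] cert8" unfolding cert8_def by (simp add: validR_def validB_def GE_def)
definition cert9 :: ctree where "cert9 = (Nd 14 (Nd 18 (LR [6,18,14,16]) (Nd 5 (LR [5,6,14,16]) (Nd 9 (Nd 23 (LR [6,23,9,14]) (Nd 10 (LR [6,10,9,14]) (Nd 1 (Nd 7 (Nd 0 (LR [6,16,0,7]) (Nd 4 (LR [7,16,4,6]) (Nd 22 (LR [6,7,16,22]) (Nd 17 (LR [7,16,6,17]) (Nd 20 (LR [6,16,7,20]) (LB [19,0,20,10,23])))))) (Nd 13 (Nd 17 (LR [13,17,1,14]) (Nd 4 (LR [4,13,1,14]) (Nd 3 (Nd 12 (LR [12,13,3,9]) (Nd 25 (LR [13,25,3,9]) (Nd 22 (Nd 11 (Nd 21 (Nd 20 (LR [11,21,1,20]) (LB [19,7,20,10,23])) (LB [21,4,17,7,18])) (LB [11,2,15,12,25])) (LB [22,2,15,12,25])))) (LB [3,2,15,4,17])))) (LB [7,10,23,13,19]))) (Nd 3 (Nd 0 (Nd 12 (LR [0,16,6,12]) (Nd 25 (LR [0,16,6,25]) (Nd 17 (LR [0,16,6,17]) (LB [1,2,15,17,19])))) (LB [19,0,1,10,23])) (LB [19,1,3,2,10]))))) (Nd 22 (Nd 7 (LR [6,7,16,22]) (Nd 25 (Nd 0 (LR [0,16,6,25]) (Nd 12 (Nd 13 (LR [13,22,12,25]) (Nd 20 (LR [16,20,6,12]) (Nd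 10 (Nd 11 (LR [10,14,6,11]) (Nd 3 (LR [6,10,3,14]) (LB [19,2,15,3,9]))) (LB [10,0,9,13,19])))) (LB [9,5,15,12,19]))) (LB [9,2,15,19,25]))) (LB [19,2,15,9,22]))))) (Nd 1 (Nd 9 (Nd 18 (LR [6,18,9,16]) (Nd 5 (LR [5,6,9,16]) (Nd 10 (LR [6,10,1,9]) (Nd 23 (LR [6,23,1,9]) (Nd 24 (Nd 11 (Nd 21 (LR [1,21,11,24]) (Nd 8 (LR [1,8,11,24]) (Nd 17 (Nd 0 (LR [0,16,6,17]) (LB [19,0,14,10,23])) (LB [14,5,18,17,19])))) (LB [14,10,15,11,19])) (LB [14,2,10,19,24])))))) (LB [19,2,15,9,14])) (LB [19,1,14,2,15])))"
lemma cert9_ok: "check [(19,False),(15,False),(2,False),(16,True),(6,True)] cert9" unfolding cert9_def by (simp add: validR_def validB_def GE_def)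
definition cert10 :: ctree where "cert10 = (Nd 10 (LR [6,14,2,10]) (Nd 9 (LR [2,6,9,14]) (Nd 5 (LR [6,14,2,5]) (Nd 17 (LR [2,14,6,17]) (Nd 19 (LR [2,14,6,19]) (Nd 4 (LR [2,14,4,6]) (Nd 18 (LR [6,14,2,18]) (LB [19,5,18,9,16]))))))))"
lemma cert10_ok: "check [(14,True),(2,True),(16,False),(6,True)] cert10" unfolding cert10_def by (simp add: validR_def validB_def GE_def)
definition cert11 :: ctree where "cert11 = (Nd 17 (LR [1,2,6,17]) (Nd 22 (LR [2,6,1,22]) (Nd 11 (LR [1,2,6,11]) (Nd 10 (LR [1,6,2,10]) (Nd 24 (LR [1,2,6,24]) (Nd 4 (LR [1,2,4,6]) (Nd 15 (LR [1,6,2,15]) (LB [15,4,17,14,16]))))))))"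
lemma cert11_ok: "check [(1,True),(14,False),(2,True),(16,False),(6,True)] cert11" unfolding cert11_def by (simp add: validR_def validB_def GE_def)
definition cert12 :: ctree where "cert12 = (Nd 4 (LR [2,3,4,6]) (Nd 23 (LR [3,6,2,23]) (Nd 19 (LR [2,3,6,19]) (Nd 10 (LR [3,6,2,10]) (LB [19,1,14,10,23])))))"
lemma cert12_ok: "check [(3,True),(1,False),(14,False),(2,True),(16,False),(6,True)] cert12" unfolding cert12_def by (simp add: validR_def validB_def GE_def)
definition cert13 :: ctree where "cert13 = (Nd 10 (LR [6,9,2,10]) (Nd 5 (LR [6,9,2,5]) (Nd 22 (LR [2,6,9,22]) (Nd 19 (LR [2,9,6,19]) (Nd 23 (LR [6,9,2,23]) (LB [19,1,3,10,23]))))))"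
lemma cert13_ok: "check [(9,True),(3,False),(1,False),(14,False),(2,True),(16,False),(6,True)] cert13" unfolding cert13_def by (simp add: validR_def validB_def GE_def)
definition cert14 :: ctree where "cert14 = (LR [2,22,6,19])"
lemma cert14_ok: "check [(22,True),(19,True),(9,False),(3,False),(1,False),(14,False),(2,True),(16,False),(6,True)] cert14" unfolding cert14_def by (simp add: validR_def validB_def GE_def)
definition cert15 :: ctree where "cert15 = (Nd 8 (Nd 20 (Nd 23 (LR [20,23,6,13]) (Nd 4 (LR [4,20,8,13]) (Nd 17 (LR [17,20,8,13]) (Nd 10 (LR [10,20,6,13]) (Nd 5 (Nd 11 (LR [8,11,5,20]) (Nd 24 (LR [8,24,5,20]) (LB [10,1,14,11,24]))) (LB [5,4,17,14,16])))))) (Nd 7 (Nd 17 (LR [7,17,8,13]) (Nd 10 (LR [7,10,6,13]) (Nd 23 (LR [7,23,13,19]) (Nd 4 (LR [4,7,8,13]) (Nd 5 (Nd 24 (LR [8,24,5,7]) (Nd 11 (LR [8,11,5,7]) (LB [10,11,24,14,20]))) (LB [5,4,17,14,16])))))) (Nd 21 (Nd 11 (Nd 25 (LR [11,25,8,21]) (Nd 5 (LR [5,11,8,21]) (Nd 18 (LR [11,18,8,21]) (Nd 12 (Nd 24 (LR [2,12,11,24]) (Nd 0 (LR [0,12,11,13]) (Nd 15 (LR [11,12,2,15]) (LB [25,0,15,16,24])))) (LB [12,5,18,16,22]))))) (Nd 24 (Nd 5 (LR [5,24,8,21]) (Nd 25 (LR [24,25,2,8]) (Nd 18 (LR [18,24,8,21])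 (Nd 12 (Nd 15 (LR [12,24,2,15]) (Nd 0 (LR [0,12,13,24]) (LB [25,0,15,11,16]))) (LB [12,5,18,11,16]))))) (Nd 10 (Nd 0 (LR [0,10,6,19]) (Nd 12 (Nd 15 (Nd 4 (Nd 5 (LR [4,5,8,21]) (Nd 18 (LR [4,18,8,21]) (LB [14,5,18,11,24]))) (Nd 17 (Nd 5 (LR [5,17,8,21]) (Nd 18 (LR [17,18,8,21]) (LB [14,4,24,5,18]))) (LB [16,0,7,4,17]))) (LB [15,1,14,11,24])) (LB [12,0,20,16,24]))) (LB [10,7,14,11,24])))) (Nd 4 (Nd 17 (Nd 0 (LR [0,13,4,17]) (Nd 18 (LR [8,18,4,17]) (Nd 5 (LR [5,8,4,17]) (LB [21,5,18,9,22])))) (LB [17,7,20,16,21])) (LB [4,7,20,16,21]))))) (Nd 21 (Nd 20 (Nd 23 (LR [20,23,6,13]) (Nd 10 (LR [10,20,6,13]) (Nd 4 (LR [4,20,13,21]) (LB [8,1,3,4,23])))) (Nd 4 (Nd 7 (LR [4,7,13,21]) (Nd 17 (Nd 0 (LR [0,13,4,17]) (Nd 5 (LR [5,21,4,17]) (Nd 18 (LR [18,21,4,17]) (LB [8,5,18,9,22])))) (LB [17,7,20,8,16]))) (Nd 23 (Nd 7 (LR [7,23,13,19]) (LB [4,7,20,8,16])) (LB [8,1,3,4,23])))) (Nd 18 (Nd 23 (Nd 20 (LR [20,23,6,13]) (Nd 7 (LR [7,23,13,19]) (Nd 0 (LR [0,23,6,13]) (Nd 17 (Nd 4 (Nd 24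 (Nd 12 (LR [12,24,2,18]) (Nd 5 (Nd 11 (Nd 25 (LR [2,25,11,24]) (LB [25,8,21,9,22])) (LB [12,0,20,11,16])) (LB [5,9,22,12,21]))) (LB [24,7,20,8,21])) (LB [7,4,22,8,21])) (LB [17,7,20,8,21]))))) (LB [23,1,9,8,21])) (LB [18,8,21,9,22]))))"
lemma cert15_ok: "check [(13,True),(22,False),(19,True),(9,False),(3,False),(1,False),(14,False),(2,True),(16,False),(6,True)] cert15" unfolding cert15_def by (simp add: validR_def validB_def GE_def)
definition cert16 :: ctree where "cert16 = (Nd 23 (Nd 0 (LR [0,23,6,19]) (Nd 20 (LR [20,23,6,19]) (Nd 7 (LR [7,23,6,19]) (Nd 17 (Nd 4 (Nd 12 (Nd 11 (Nd 24 (LR [2,12,11,24]) (Nd 15 (LR [11,12,2,15]) (Nd 18 (LR [11,12,2,18]) (Nd 5 (LR [11,12,2,5]) (Nd 25 (LR [2,11,12,25]) (LB [25,3,22,13,15])))))) (Nd 10 (Nd 8 (Nd 18 (LR [8,18,4,17]) (Nd 5 (LR [5,8,4,17]) (Nd 21 (Nd 24 (Nd 25 (LR [2,24,12,25]) (Nd 15 (LR [12,24,2,15]) (LB [25,3,22,13,15]))) (LB [14,5,18,11,24])) (LB [21,5,18,9,22])))) (Nd 25 (Nd 24 (LR [2,24,12,25]) (LB [8,1,20,11,24])) (LB [8,7,25,11,22]))) (LB [10,1,20,11,13]))) (LB [12,0,20,13,16])) (LB [4,0,7,13,16])) (LB [17,0,20,13,16]))))) (Nd 25 (Nd 17 (Nd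 10 (Nd 0 (LR [0,10,6,19]) (Nd 7 (LR [7,10,6,19]) (Nd 20 (LR [10,20,6,19]) (Nd 21 (Nd 11 (LR [11,25,2,21]) (Nd 24 (LR [24,25,2,21]) (Nd 8 (Nd 5 (LR [5,17,8,21]) (Nd 18 (LR [17,18,8,21]) (LB [14,5,18,11,24]))) (LB [8,1,20,11,23])))) (LB [7,13,21,22,23]))))) (LB [13,3,14,10,23])) (LB [13,1,14,17,23])) (LB [13,3,9,23,25])))"
lemma cert16_ok: "check [(13,False),(22,False),(19,True),(9,False),(3,False),(1,False),(14,False),(2,True),(16,False),(6,True)] cert16" unfolding cert16_def by (simp add: validR_def validB_def GE_def)
definition cert17 :: ctree where "cert17 = (Nd 15 (Nd 22 (LR [6,22,2,15]) (Nd 23 (Nd 5 (Nd 13 (Nd 20 (LR [20,23,6,13]) (Nd 0 (LR [0,23,6,13]) (Nd 7 (LR [7,23,6,13]) (Nd 4 (Nd 10 (Nd 12 (Nd 11 (LR [11,12,2,15]) (Nd 24 (LR [12,24,2,5]) (Nd 21 (Nd 18 (LR [4,21,5,18]) (LB [19,7,18,16,22])) (LB [21,1,7,11,24])))) (LB [16,0,20,12,19])) (LB [19,0,20,10,16])) (LB [16,4,19,7,20]))))) (Nd 10 (Nd 0 (LR [0,6,10,23]) (Nd 7 (LR [6,7,10,23]) (Nd 20 (LR [6,20,10,23]) (Nd 4 (Nd 17 (Nd 21 (LR [5,21,4,17]) (Nd 8 (LR [5,8,4,17]) (Nd 18 (Nd 12 (Nd 11 (LR [11,12,15,18]) (LB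 [11,7,20,8,21])) (LB [16,0,20,12,19])) (LB [18,8,21,9,22])))) (LB [17,0,20,13,16])) (LB [16,4,19,7,20]))))) (LB [10,3,14,13,19]))) (Nd 4 (Nd 12 (Nd 11 (LR [11,12,2,15]) (Nd 24 (LR [12,24,2,15]) (Nd 17 (Nd 21 (Nd 7 (LR [7,21,17,23]) (LB [19,5,7,16,22])) (LB [5,11,24,14,21])) (LB [5,14,16,17,19])))) (LB [5,9,16,12,19])) (LB [5,4,19,14,16]))) (Nd 13 (Nd 8 (Nd 5 (Nd 10 (Nd 7 (LR [7,10,6,13]) (Nd 20 (LR [10,20,6,13]) (LB [19,7,20,16,23]))) (LB [19,1,3,10,23])) (LB [19,5,23,9,14])) (LB [23,1,9,8,19])) (LB [23,3,9,13,19])))) (Nd 18 (Nd 22 (LR [6,22,2,18]) (Nd 25 (Nd 5 (Nd 12 (Nd 24 (LR [2,24,12,25]) (LB [15,1,14,19,24])) (LB [15,9,16,12,19])) (LB [19,5,15,16,22])) (LB [15,16,22,19,25]))) (LB [19,9,16,15,18])))"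
lemma cert17_ok: "check [(19,False),(9,False),(3,False),(1,False),(14,False),(2,True),(16,False),(6,True)] cert17" unfolding cert17_def by (simp add: validR_def validB_def GE_def)
definition cert18 :: ctree where "cert18 = (Nd 14 (Nd 4 (LR [14,15,4,6]) (Nd 17 (LR [14,15,6,17]) (Nd 22 (LR [6,15,14,22]) (Nd 18 (LR [6,14,15,18]) (LB [16,2,18,4,17]))))) (Nd 19 (Nd 3 (LR [3,15,6,19]) (Nd 9 (LR [9,15,6,19]) (Nd 1 (LR [1,15,6,19]) (Nd 22 (LR [15,22,6,19]) (Nd 4 (Nd 12 (Nd 8 (Nd 20 (Nd 11 (LR [11,20,8,12]) (Nd 13 (LR [4,20,8,13]) (Nd 5 (LR [4,8,5,20]) (Nd 24 (LR [20,24,8,12]) (LB [2,1,14,11,24]))))) (Nd 11 (Nd 24 (LR [12,15,11,24]) (Nd 0 (LR [11,12,0,15]) (Nd 18 (LR [11,12,15,18]) (Nd 7 (LR [7,8,4,11]) (Nd 5 (LR [5,11,8,12]) (Nd 25 (LR [11,15,12,25]) (LB [25,0,2,16,24]))))))) (Nd 24 (Nd 7 (LR [7,8,4,24]) (Nd 25 (LR [15,24,12,25]) (Nd 5 (LR [5,24,8,12]) (Nd 18 (LR [18,24,8,12]) (Nd 0 (LR [12,24,0,15]) (LB [25,0,2,11,16])))))) (LB [2,1,14,11,24])))) (Nd 17 (Nd 25 (Nd 24 (LR [15,24,12,25]) (Nd 11 (LR [11,15,12,25]) (LB [2,1,14,11,24]))) (LB [25,2,8,3,9])) (LB [17,1,3,2,8])))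 (Nd 25 (Nd 13 (Nd 0 (LR [0,13,4,25]) (Nd 24 (Nd 11 (LR [15,25,11,24]) (LB [12,0,2,11,16])) (LB [12,0,2,16,24]))) (LB [12,2,13,3,22])) (LB [2,12,25,16,22]))) (Nd 17 (Nd 8 (Nd 13 (Nd 7 (LR [7,17,8,13]) (Nd 20 (LR [17,20,8,13]) (Nd 12 (Nd 0 (LR [0,13,12,17]) (Nd 25 (Nd 24 (LR [15,24,12,25]) (LB [2,1,14,4,24])) (LB [16,0,2,4,25]))) (LB [16,2,20,4,12])))) (LB [4,1,3,2,13])) (LB [4,1,3,2,8])) (LB [2,1,3,4,17]))))))) (Nd 4 (Nd 1 (LR [1,15,4,6]) (Nd 3 (LR [3,15,4,6]) (Nd 10 (Nd 9 (LR [6,9,10,15]) (Nd 18 (Nd 22 (LR [6,22,15,18]) (Nd 5 (Nd 21 (LR [4,21,5,18]) (Nd 8 (LR [4,8,5,18]) (Nd 23 (Nd 0 (LR [0,6,10,23]) (Nd 7 (LR [6,7,10,23]) (LB [19,2,7,16,22]))) (LB [23,1,9,8,19])))) (LB [19,2,5,9,16]))) (LB [19,2,18,9,16]))) (LB [19,1,3,2,10])))) (LB [2,4,19,14,16]))))"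
lemma cert18_ok: "check [(15,True),(2,False),(16,False),(6,True)] cert18" unfolding cert18_def by (simp add: validR_def validB_def GE_def)
definition cert19 :: ctree where "cert19 = (Nd 1 (LR [1,23,6,19]) (Nd 3 (LR [3,23,6,19]) (Nd 9 (LR [9,23,6,19]) (Nd 0 (LR [0,23,6,19]) (Nd 20 (LR [20,23,6,19]) (Nd 7 (LR [7,23,6,19]) (Nd 14 (LR [14,23,6,19]) (Nd 24 (Nd 4 (Nd 17 (Nd 25 (Nd 11 (Nd 18 (LR [12,18,11,24]) (Nd 5 (LR [5,12,11,24]) (Nd 8 (LR [8,25,11,24]) (Nd 21 (LR [21,25,11,24]) (LB [9,5,18,8,21]))))) (LB [11,1,14,2,15])) (LB [25,2,15,3,16])) (LB [17,1,16,2,15])) (LB [4,2,15,3,16])) (LB [24,1,14,2,15])))))))))"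
lemma cert19_ok: "check [(23,True),(12,True),(19,True),(15,False),(2,False),(16,False),(6,True)] cert19" unfolding cert19_def by (simp add: validR_def validB_def GE_def)
definition cert20 :: ctree where "cert20 = (Nd 9 (LR [9,10,6,19]) (Nd 3 (LR [3,10,6,19]) (Nd 0 (LR [0,10,6,19]) (Nd 7 (LR [7,10,6,19]) (Nd 14 (LR [10,14,6,19]) (Nd 1 (LR [1,10,6,19]) (Nd 20 (LR [10,20,6,19]) (Nd 24 (Nd 4 (Nd 17 (Nd 25 (Nd 11 (Nd 18 (LR [12,18,11,24]) (Nd 5 (LR [5,12,11,24]) (Nd 8 (LR [8,25,11,24]) (Nd 21 (LR [21,25,11,24]) (LB [23,1,9,8,21]))))) (LB [11,1,14,2,15])) (LB [25,2,15,3,16])) (LB [17,1,16,2,15])) (LB [4,2,15,3,16])) (LB [24,1,14,2,15])))))))))"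
lemma cert20_ok: "check [(10,True),(23,False),(12,True),(19,True),(15,False),(2,False),(16,False),(6,True)] cert20" unfolding cert20_def by (simp add: validR_def validB_def GE_def)
definition cert21 :: ctree where "cert21 = (Nd 4 (Nd 5 (Nd 22 (LR [5,22,6,19]) (Nd 9 (LR [5,9,6,12]) (Nd 14 (LR [5,14,4,19]) (Nd 25 (Nd 13 (Nd 0 (LR [0,13,12,25]) (Nd 20 (LR [13,20,4,12]) (Nd 3 (LR [3,13,4,12]) (Nd 17 (Nd 1 (LR [1,13,4,17]) (Nd 21 (LR [5,21,4,17]) (Nd 8 (LR [5,8,4,17]) (LB [23,1,9,8,21])))) (LB [17,2,15,3,16]))))) (LB [13,9,14,10,23])) (LB [25,2,15,16,22]))))) (Nd 18 (Nd 22 (LR [18,22,6,19]) (Nd 9 (LR [9,18,6,19]) (Nd 14 (LR [14,18,4,6]) (Nd 25 (Nd 13 (Nd 0 (LR [0,13,12,25]) (Nd 20 (LR [13,20,4,12]) (Nd 3 (LR [3,13,4,12]) (Nd 17 (Nd 1 (LR [1,13,4,17]) (Nd 8 (LR [8,18,4,17]) (Nd 21 (LR [18,21,4,17]) (LB [23,1,9,8,21])))) (LB [17,2,15,3,16]))))) (LB [13,9,14,10,23])) (LB [25,2,15,16,22]))))) (Nd 17 (Nd 13 (Nd 0 (LR [0,13,4,17]) (Nd 1 (LR [1,13,4,17]) (Nd 20 (LR [13,20,4,17]) (Nd 3 (LR [3,13,4,17]) (Nd 14 (LR [13,14,4,17]) (Nd 7 (LR [7,13,4,17]) (Nd 24 (Nd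 11 (Nd 25 (Nd 22 (LR [13,22,12,25]) (Nd 8 (LR [8,25,11,24]) (Nd 21 (LR [21,25,11,24]) (LB [23,1,7,8,21])))) (LB [25,2,15,3,16])) (LB [11,1,14,2,10])) (LB [24,1,14,2,15])))))))) (Nd 8 (Nd 20 (LR [8,20,4,17]) (Nd 1 (LR [1,8,4,17]) (LB [13,1,20,10,23]))) (Nd 21 (Nd 3 (LR [3,21,4,17]) (Nd 7 (LR [7,21,4,17]) (LB [23,3,7,8,13]))) (Nd 24 (Nd 11 (Nd 0 (LR [0,12,11,24]) (Nd 20 (LR [12,20,11,24]) (LB [13,0,20,10,23]))) (LB [11,5,18,8,21])) (LB [24,5,18,8,21]))))) (Nd 14 (Nd 8 (Nd 1 (Nd 11 (LR [1,8,4,11]) (Nd 3 (LR [4,8,1,3]) (LB [17,2,15,3,16]))) (LB [17,1,16,2,15])) (LB [17,5,18,8,16])) (LB [17,14,16,15,18]))))) (Nd 3 (Nd 14 (Nd 18 (LR [14,18,6,19]) (Nd 5 (LR [5,14,6,19]) (Nd 17 (Nd 13 (LR [13,17,3,14]) (Nd 1 (Nd 21 (LR [17,21,1,3]) (LB [4,5,18,16,21])) (LB [4,1,16,2,15]))) (LB [16,2,5,4,17])))) (LB [4,2,15,14,16])) (LB [4,2,15,3,16])))"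
lemma cert21_ok: "check [(10,False),(23,False),(12,True),(19,True),(15,False),(2,False),(16,False),(6,True)] cert21" unfolding cert21_def by (simp add: validR_def validB_def GE_def)
definition cert22 :: ctree where "cert22 = (Nd 3 (Nd 23 (LR [3,23,6,19]) (Nd 10 (LR [3,10,6,19]) (Nd 24 (Nd 4 (Nd 25 (Nd 8 (LR [3,8,4,25]) (Nd 21 (LR [21,25,3,24]) (Nd 13 (LR [3,13,4,25]) (Nd 17 (Nd 9 (Nd 18 (LR [9,18,6,19]) (Nd 5 (LR [5,9,6,19]) (Nd 22 (Nd 7 (LR [7,22,6,19]) (Nd 11 (Nd 0 (LR [0,25,11,24]) (LB [13,0,7,10,23])) (LB [12,5,18,11,16]))) (LB [22,5,18,8,12])))) (LB [12,2,15,9,16])) (LB [16,2,15,12,17]))))) (LB [16,2,15,12,25])) (LB [16,2,15,4,12])) (LB [12,2,15,16,24])))) (LB [12,2,15,3,16]))"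
lemma cert22_ok: "check [(12,False),(19,True),(15,False),(2,False),(16,False),(6,True)] cert22" unfolding cert22_def by (simp add: validR_def validB_def GE_def)
definition cert23 :: ctree where "cert23 = (Nd 3 (Nd 4 (Nd 22 (Nd 9 (Nd 10 (LR [6,10,3,9]) (Nd 18 (LR [6,18,9,22]) (Nd 5 (LR [5,6,9,22]) (Nd 23 (LR [6,23,3,9]) (Nd 14 (Nd 13 (LR [4,13,3,14]) (Nd 7 (Nd 21 (LR [7,22,6,21]) (Nd 8 (LR [4,8,3,7]) (Nd 12 (Nd 17 (Nd 24 (Nd 20 (Nd 0 (LR [12,24,0,20]) (LB [0,10,23,13,19])) (LB [20,10,23,13,19])) (LB [24,5,18,8,21])) (LB [16,2,18,17,19])) (LB [16,12,19,15,18])))) (LB [7,10,23,13,19]))) (LB [19,14,16,15,18])))))) (LB [19,2,15,9,16])) (LB [19,2,15,16,22])) (LB [16,2,15,4,19])) (LB [19,2,15,3,16]))"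
lemma cert23_ok: "check [(19,False),(15,False),(2,False),(16,False),(6,True)] cert23" unfolding cert23_def by (simp add: validR_def validB_def GE_def)
definition cert24 :: ctree where "cert24 = (Nd 2 (Nd 20 (LR [16,19,2,20]) (Nd 12 (LR [2,16,12,19]) (Nd 17 (LR [2,16,17,19]) (Nd 9 (LR [2,19,9,16]) (Nd 3 (LR [2,19,3,16]) (Nd 14 (LR [2,19,14,16]) (Nd 25 (LR [2,16,19,25]) (Nd 7 (LR [16,19,2,7]) (Nd 15 (LR [16,19,2,15]) (LB [15,3,9,12,25])))))))))) (Nd 15 (Nd 5 (LR [16,19,5,15]) (Nd 1 (LR [15,19,1,16]) (Nd 25 (LR [15,16,19,25]) (Nd 9 (LR [15,19,9,16]) (Nd 22 (LR [15,19,16,22]) (LB [2,6,25,9,22])))))) (Nd 14 (Nd 5 (LR [5,19,14,16]) (Nd 18 (LR [18,19,14,16]) (Nd 9 (Nd 23 (LR [19,23,9,14]) (Nd 10 (LR [10,19,9,14]) (Nd 1 (Nd 7 (Nd 17 (LR [7,16,17,19]) (Nd 20 (LR [16,19,7,20]) (Nd 4 (LR [7,16,4,19]) (Nd 0 (LR [16,19,0,7]) (LB [6,0,20,10,23]))))) (Nd 13 (Nd 17 (LR [13,17,1,14]) (Nd 4 (LR [4,13,1,14]) (Nd 3 (Nd 12 (LR [12,13,3,9]) (Nd 25 (LR [13,25,3,9]) (Nd 22 (Nd 11 (Nd 20 (Nd 0 (LR [16,19,0,20]) (LB [6,0,7,10,23])) (LB [6,7,20,10,23])) (LB [11,2,15,12,25]))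 (LB [22,2,15,12,25])))) (LB [3,2,15,4,17])))) (LB [7,6,13,10,23]))) (Nd 24 (Nd 3 (Nd 22 (Nd 7 (LR [7,19,16,22]) (LB [6,1,7,10,23])) (LB [6,1,22,2,15])) (LB [6,1,3,15,23])) (LB [1,2,10,6,24]))))) (Nd 3 (Nd 10 (LR [10,19,3,14]) (Nd 23 (LR [19,23,3,14]) (Nd 8 (Nd 7 (Nd 17 (LR [7,16,17,19]) (Nd 20 (LR [16,19,7,20]) (LB [6,9,20,10,23]))) (LB [6,7,9,10,23])) (LB [9,5,23,6,8])))) (LB [6,2,15,3,9]))))) (Nd 1 (Nd 24 (Nd 10 (LR [1,10,19,24]) (Nd 9 (Nd 18 (LR [18,19,9,16]) (Nd 23 (LR [19,23,1,9]) (Nd 5 (LR [5,19,9,16]) (Nd 13 (Nd 4 (Nd 7 (LR [4,7,13,16]) (LB [6,7,14,10,23])) (LB [14,4,6,15,18])) (LB [14,6,13,10,23]))))) (LB [6,9,14,10,15]))) (LB [14,2,15,6,24])) (LB [6,1,14,2,15])))))"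
lemma cert24_ok: "check [(16,True),(19,True),(6,False)] cert24" unfolding cert24_def by (simp add: validR_def validB_def GE_def)
definition cert25 :: ctree where "cert25 = (Nd 14 (Nd 5 (LR [14,19,2,5]) (Nd 18 (LR [14,19,2,18]) (Nd 15 (LR [14,19,2,15]) (Nd 1 (LR [2,19,1,14]) (Nd 9 (LR [2,19,9,14]) (LB [6,5,15,9,16])))))) (Nd 15 (Nd 9 (LR [9,19,2,15]) (Nd 1 (LR [1,19,2,15]) (Nd 3 (LR [3,19,2,15]) (Nd 22 (LR [19,22,2,15]) (Nd 23 (Nd 5 (Nd 13 (Nd 7 (LR [7,23,13,19]) (Nd 0 (LR [0,23,13,19]) (Nd 20 (LR [20,23,13,19]) (Nd 10 (Nd 17 (Nd 18 (Nd 8 (LR [8,17,5,18]) (Nd 21 (LR [17,21,5,18]) (Nd 4 (Nd 24 (Nd 25 (LR [24,25,2,15]) (LB [25,8,21,9,22])) (LB [24,7,20,8,21])) (LB [7,4,22,8,21])))) (LB [6,7,18,16,22])) (LB [16,6,17,7,20])) (LB [6,0,20,10,16]))))) (Nd 10 (Nd 0 (LR [0,19,10,23]) (Nd 20 (LR [19,20,10,23]) (Nd 7 (LR [7,19,10,23]) (Nd 17 (Nd 4 (Nd 21 (LR [5,21,4,17]) (Nd 8 (LR [5,8,4,17]) (Nd 18 (Nd 24 (Nd 25 (LR [24,25,2,15]) (LB [25,8,21,9,22])) (LB [24,7,20,8,21])) (LB [22,6,21,7,18])))) (LB [4,0,7,13,16])) (LB [17,0,20,13,16]))))) (LB [10,3,9,6,13])))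 (Nd 12 (Nd 11 (LR [11,12,2,15]) (Nd 24 (LR [12,24,2,15]) (Nd 8 (Nd 7 (LR [7,23,8,19]) (LB [6,5,7,16,22])) (LB [5,6,8,9,22])))) (LB [5,6,12,9,16]))) (Nd 18 (Nd 8 (Nd 10 (Nd 21 (Nd 11 (LR [11,18,8,21]) (Nd 17 (LR [17,18,8,21]) (Nd 4 (LR [4,18,8,21]) (Nd 24 (LR [18,24,8,21]) (Nd 5 (Nd 13 (Nd 7 (LR [7,10,13,19]) (Nd 0 (LR [0,10,13,19]) (LB [16,0,7,4,17]))) (LB [13,1,3,4,17])) (LB [5,4,17,14,16])))))) (LB [23,1,3,6,21])) (LB [6,3,9,10,23])) (LB [23,3,9,6,8])) (LB [6,9,14,18,23]))))))) (Nd 4 (Nd 1 (LR [1,2,4,19]) (Nd 3 (LR [2,3,4,19]) (Nd 23 (Nd 9 (LR [9,19,2,23]) (Nd 18 (Nd 22 (LR [19,22,2,18]) (Nd 10 (Nd 0 (LR [0,19,10,23]) (Nd 20 (LR [19,20,10,23]) (Nd 7 (LR [7,19,10,23]) (LB [6,7,15,16,22])))) (LB [6,1,14,10,15]))) (LB [6,9,14,15,18]))) (LB [6,1,3,15,23])))) (LB [15,4,6,14,16]))))"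
lemma cert25_ok: "check [(2,True),(16,False),(19,True),(6,False)] cert25" unfolding cert25_def by (simp add: validR_def validB_def GE_def)
definition cert26 :: ctree where "cert26 = (Nd 15 (Nd 14 (Nd 5 (LR [14,19,5,15]) (Nd 10 (LR [14,19,10,15]) (Nd 24 (LR [14,15,19,24]) (Nd 4 (LR [14,15,4,19]) (LB [16,2,5,4,6]))))) (Nd 17 (Nd 1 (LR [1,15,17,19]) (Nd 3 (LR [3,15,17,19]) (Nd 23 (Nd 9 (LR [9,19,15,23]) (Nd 4 (Nd 25 (Nd 22 (LR [15,22,19,25]) (Nd 7 (Nd 13 (LR [7,23,13,19]) (Nd 21 (LR [7,21,17,23]) (Nd 8 (LR [7,8,17,23]) (Nd 10 (LR [7,19,10,23]) (LB [10,3,9,6,13]))))) (LB [6,2,7,16,22]))) (LB [2,3,16,6,25])) (LB [2,3,14,4,6]))) (LB [6,2,23,3,14])))) (LB [2,6,17,14,16]))) (Nd 12 (Nd 17 (Nd 4 (Nd 14 (Nd 18 (LR [14,18,17,19]) (Nd 5 (LR [5,14,17,19]) (Nd 13 (LR [13,14,4,17]) (Nd 9 (Nd 23 (LR [19,23,9,14]) (Nd 10 (LR [10,19,9,14]) (Nd 7 (Nd 21 (LR [7,21,4,17]) (Nd 8 (LR [7,8,4,17]) (Nd 24 (Nd 22 (Nd 11 (Nd 0 (LR [0,12,11,24]) (LB [0,6,13,10,23])) (LB [11,5,18,8,21])) (LB [22,5,18,6,8])) (LB [24,5,18,8,21])))) (LB [7,6,13,10,23])))) (LB [6,5,15,9,16])))))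 (LB [6,2,15,14,16])) (LB [16,2,15,4,6])) (LB [16,2,15,6,17])) (LB [16,2,15,6,12])))"
lemma cert26_ok: "check [(2,False),(16,False),(19,True),(6,False)] cert26" unfolding cert26_def by (simp add: validR_def validB_def GE_def)
definition cert27 :: ctree where "cert27 = (Nd 24 (LR [2,12,16,24]) (Nd 4 (LR [2,16,4,12]) (Nd 22 (LR [2,12,16,22]) (Nd 18 (LR [12,16,2,18]) (Nd 20 (LR [12,16,2,20]) (Nd 25 (LR [2,16,12,25]) (Nd 0 (LR [12,16,0,2]) (Nd 3 (LR [2,12,3,16]) (Nd 15 (LR [12,16,2,15]) (LB [15,3,22,6,19]))))))))))"
lemma cert27_ok: "check [(12,True),(16,True),(2,True),(19,False),(6,False)] cert27" unfolding cert27_def by (simp add: validR_def validB_def GE_def)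
definition cert28 :: ctree where "cert28 = (Nd 15 (LR [4,16,2,15]) (Nd 18 (LR [4,16,2,18]) (Nd 3 (LR [2,4,3,16]) (Nd 17 (LR [2,16,4,17]) (Nd 25 (LR [2,16,4,25]) (Nd 7 (LR [4,16,2,7]) (Nd 14 (LR [2,4,14,16]) (LB [14,6,19,15,18]))))))))"
lemma cert28_ok: "check [(4,True),(12,False),(16,True),(2,True),(19,False),(6,False)] cert28" unfolding cert28_def by (simp add: validR_def validB_def GE_def)
definition cert29 :: ctree where "cert29 = (Nd 3 (LR [2,17,3,16]) (Nd 15 (LR [16,17,2,15]) (Nd 7 (LR [16,17,2,7]) (Nd 20 (LR [16,17,2,20]) (Nd 5 (LR [16,17,2,5]) (Nd 14 (LR [2,17,14,16]) (LB [14,5,15,6,19])))))))"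
lemma cert29_ok: "check [(17,True),(4,False),(12,False),(16,True),(2,True),(19,False),(6,False)] cert29" unfolding cert29_def by (simp add: validR_def validB_def GE_def)
definition cert30 :: ctree where "cert30 = (Nd 25 (Nd 9 (LR [9,25,2,8]) (Nd 11 (LR [2,25,11,16]) (Nd 24 (LR [2,25,16,24]) (Nd 3 (LR [3,25,2,8]) (Nd 15 (LR [16,25,2,15]) (LB [15,3,9,12,19])))))) (Nd 11 (Nd 1 (LR [2,11,1,14]) (Nd 15 (LR [11,14,2,15]) (Nd 10 (LR [11,14,2,10]) (LB [1,6,19,10,15])))) (Nd 24 (Nd 18 (LR [14,24,2,18]) (Nd 5 (LR [5,24,8,14]) (Nd 15 (LR [14,24,2,15]) (Nd 1 (LR [1,24,2,8]) (Nd 10 (LR [14,24,2,10]) (LB [1,10,15,11,19])))))) (Nd 0 (Nd 15 (Nd 21 (Nd 23 (Nd 13 (LR [13,23,0,14]) (Nd 1 (LR [1,23,8,21]) (Nd 7 (LR [7,23,8,21]) (LB [13,1,7,4,17])))) (Nd 10 (Nd 13 (LR [10,13,0,14]) (Nd 3 (Nd 7 (Nd 22 (LR [7,22,8,21]) (Nd 9 (Nd 5 (LR [5,9,8,21]) (Nd 18 (LR [9,18,8,21]) (LB [12,5,18,22,24]))) (LB [13,9,22,12,25]))) (Nd 1 (Nd 20 (Nd 22 (Nd 5 (LR [5,22,8,21]) (Nd 18 (LR [18,22,8,21]) (LB [12,5,18,11,24]))) (LB [7,13,19,22,23])) (LB [23,6,13,7,20])) (LB [23,1,7,6,19]))) (Nd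 9 (Nd 5 (LR [5,9,8,21]) (Nd 18 (LR [9,18,8,21]) (LB [12,5,18,11,24]))) (LB [23,3,9,13,19])))) (Nd 20 (Nd 1 (Nd 9 (Nd 5 (LR [5,9,8,21]) (Nd 18 (LR [9,18,8,21]) (LB [12,5,18,11,24]))) (LB [9,6,19,10,23])) (LB [1,6,19,10,23])) (LB [20,6,19,10,23])))) (Nd 5 (Nd 7 (Nd 22 (LR [8,22,5,7]) (Nd 1 (Nd 23 (LR [8,23,1,7]) (Nd 18 (Nd 9 (LR [8,9,5,18]) (Nd 20 (Nd 13 (Nd 10 (LR [10,13,0,20]) (LB [9,6,19,10,23])) (LB [13,9,22,12,25])) (LB [23,9,20,19,21]))) (LB [21,11,22,18,25]))) (LB [21,1,25,11,24]))) (LB [21,7,25,11,24])) (LB [21,5,25,11,24]))) (LB [15,11,24,12,25])) (LB [0,11,24,12,25])))))"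
lemma cert30_ok: "check [(8,True),(14,True),(17,False),(4,False),(12,False),(16,True),(2,True),(19,False),(6,False)] cert30" unfolding cert30_def by (simp add: validR_def validB_def GE_def)
definition cert31 :: ctree where "cert31 = (Nd 21 (Nd 1 (Nd 11 (LR [2,11,1,14]) (Nd 24 (LR [2,24,1,14]) (Nd 5 (Nd 20 (Nd 23 (LR [21,23,1,20]) (Nd 18 (Nd 22 (LR [21,22,5,18]) (Nd 9 (LR [9,21,5,18]) (Nd 7 (Nd 3 (Nd 25 (LR [3,25,2,21]) (Nd 15 (Nd 13 (Nd 10 (LR [10,13,1,3]) (LB [9,6,19,10,23])) (LB [13,9,22,12,25])) (LB [15,9,11,12,25]))) (LB [23,3,9,6,8])) (LB [7,8,19,22,23])))) (LB [18,8,12,11,24]))) (LB [20,8,12,11,24])) (LB [5,8,12,11,24])))) (Nd 20 (Nd 15 (Nd 11 (LR [11,14,2,15]) (Nd 25 (LR [16,25,2,15]) (Nd 24 (LR [14,24,2,15]) (LB [8,1,25,11,24])))) (LB [1,4,17,8,15])) (LB [8,1,20,4,17]))) (Nd 1 (Nd 11 (LR [2,11,1,14]) (Nd 24 (LR [2,24,1,14]) (Nd 7 (Nd 20 (Nd 5 (Nd 18 (Nd 25 (Nd 15 (LR [16,25,2,15]) (Nd 0 (LR [16,25,0,2]) (LB [12,0,15,11,24]))) (LB [25,8,21,11,24])) (LB [18,4,11,8,21])) (LB [5,8,21,17,24])) (LB [20,8,21,11,24])) (LB [7,4,24,8,21])))) (LB [1,4,17,8,21])))"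
lemma cert31_ok: "check [(8,False),(14,True),(17,False),(4,False),(12,False),(16,True),(2,True),(19,False),(6,False)] cert31" unfolding cert31_def by (simp add: validR_def validB_def GE_def)
definition cert32 :: ctree where "cert32 = (Nd 15 (Nd 25 (LR [16,25,2,15]) (Nd 10 (Nd 13 (Nd 5 (Nd 1 (Nd 11 (LR [1,11,2,15]) (Nd 3 (LR [10,13,1,3]) (Nd 9 (LR [10,13,1,9]) (Nd 0 (LR [10,13,0,1]) (Nd 24 (LR [1,24,10,15]) (LB [0,11,24,12,25])))))) (Nd 23 (Nd 9 (LR [9,13,10,23]) (Nd 7 (LR [7,13,10,23]) (Nd 0 (LR [0,13,10,23]) (Nd 3 (LR [3,13,10,23]) (Nd 20 (LR [13,20,10,23]) (Nd 8 (Nd 21 (Nd 24 (LR [5,24,8,21]) (Nd 11 (LR [5,11,8,21]) (LB [0,11,24,12,25]))) (LB [21,1,20,4,17])) (LB [8,4,17,7,20]))))))) (LB [23,1,14,6,19]))) (Nd 18 (Nd 22 (Nd 7 (LR [7,13,10,22]) (Nd 23 (Nd 9 (LR [9,13,10,23]) (LB [5,6,19,9,14])) (LB [14,5,23,6,19]))) (LB [5,6,19,14,22])) (LB [14,5,18,17,19]))) (Nd 0 (Nd 5 (Nd 3 (Nd 18 (Nd 20 (Nd 24 (LR [10,24,0,20]) (Nd 11 (LR [10,11,0,20]) (Nd 1 (Nd 7 (Nd 23 (Nd 8 (LR [8,23,7,20]) (Nd 21 (LR [21,23,1,3]) (LB [25,8,21,11,24]))) (Nd 9 (Nd 21 (LR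 [9,21,5,18]) (Nd 8 (LR [8,9,5,18]) (LB [25,8,21,11,24]))) (LB [23,9,14,13,19]))) (LB [13,4,17,7,14])) (LB [13,1,14,4,17])))) (LB [13,4,17,14,20])) (LB [14,4,17,13,18])) (LB [13,3,14,4,17])) (LB [14,4,17,5,13])) (LB [13,0,14,4,17]))) (Nd 20 (Nd 3 (Nd 7 (Nd 0 (Nd 18 (Nd 9 (Nd 23 (Nd 8 (LR [8,23,7,20]) (Nd 13 (LR [13,23,0,9]) (Nd 21 (LR [9,21,18,23]) (Nd 1 (Nd 11 (LR [1,11,2,15]) (Nd 24 (LR [1,24,2,15]) (LB [25,8,21,11,24]))) (LB [1,4,17,8,21]))))) (LB [14,6,19,10,23])) (LB [10,6,19,9,14])) (LB [14,6,19,10,18])) (LB [10,0,14,6,19])) (LB [10,6,19,7,14])) (LB [10,3,14,6,19])) (LB [10,6,19,14,20])))) (Nd 5 (Nd 18 (Nd 3 (Nd 25 (LR [2,25,3,16]) (Nd 22 (Nd 21 (LR [21,22,5,18]) (Nd 8 (LR [8,22,5,18]) (Nd 1 (Nd 13 (Nd 10 (LR [10,13,1,3]) (LB [14,6,19,10,15])) (LB [14,4,17,13,15])) (LB [1,4,17,8,21])))) (LB [15,6,19,14,22]))) (LB [15,3,14,4,17])) (LB [14,4,6,15,18])) (LB [14,5,15,6,19])))"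
lemma cert32_ok: "check [(14,False),(17,False),(4,False),(12,False),(16,True),(2,True),(19,False),(6,False)] cert32" unfolding cert32_def by (simp add: validR_def validB_def GE_def)
definition cert33 :: ctree where "cert33 = (Nd 17 (LR [14,17,5,15]) (Nd 11 (LR [11,14,2,15]) (Nd 24 (LR [14,24,5,15]) (Nd 4 (LR [4,14,2,5]) (Nd 20 (Nd 7 (Nd 13 (Nd 10 (LR [10,13,14,20]) (Nd 23 (LR [13,23,7,20]) (Nd 1 (Nd 0 (Nd 12 (LR [12,13,0,20]) (Nd 9 (Nd 25 (LR [13,25,0,9]) (Nd 3 (Nd 18 (Nd 21 (LR [9,21,5,18]) (Nd 8 (LR [8,9,5,18]) (LB [25,8,21,11,24]))) (Nd 22 (Nd 8 (LR [7,22,8,13]) (LB [18,4,17,8,16])) (LB [18,6,12,16,22]))) (LB [3,6,19,10,23]))) (LB [9,6,19,10,23]))) (LB [0,6,19,10,23])) (LB [1,6,19,10,23])))) (Nd 0 (Nd 8 (Nd 23 (LR [8,23,7,20]) (Nd 22 (LR [8,22,5,7]) (Nd 18 (Nd 9 (LR [8,9,5,18]) (Nd 3 (Nd 25 (LR [3,25,2,8]) (Nd 12 (LR [3,12,2,15]) (LB [13,9,22,12,25]))) (LB [23,3,9,13,19]))) (LB [18,6,19,16,22])))) (Nd 1 (Nd 18 (Nd 3 (Nd 12 (LR [3,12,2,15]) (Nd 25 (LR [3,25,2,15]) (Nd 21 (Nd 22 (LR [21,22,5,18]) (Nd 23 (LR [21,23,1,3]) (Nd 9 (LR [9,21,5,18])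 (LB [13,9,22,12,25])))) (LB [25,8,21,11,24])))) (LB [3,4,17,8,13])) (LB [18,4,17,8,16])) (LB [1,4,17,8,13]))) (LB [0,4,17,13,16]))) (Nd 0 (Nd 18 (Nd 10 (Nd 13 (LR [10,13,0,20]) (LB [7,4,17,13,16])) (LB [7,6,19,10,16])) (LB [16,4,17,7,18])) (LB [16,0,7,4,17]))) (Nd 7 (Nd 0 (Nd 10 (Nd 13 (LR [10,13,7,14]) (LB [20,4,17,13,16])) (LB [20,6,19,10,16])) (LB [16,0,20,4,19])) (LB [16,4,19,7,20])))))))"
lemma cert33_ok: "check [(14,True),(5,True),(15,True),(16,False),(2,True),(19,False),(6,False)] cert33" unfolding cert33_def by (simp add: validR_def validB_def GE_def)
definition cert34 :: ctree where "cert34 = (Nd 9 (LR [9,12,2,5]) (Nd 22 (LR [12,22,2,15]) (Nd 11 (LR [11,12,15,18]) (Nd 24 (LR [12,24,2,18]) (Nd 3 (LR [3,12,2,15]) (Nd 10 (Nd 7 (Nd 23 (Nd 13 (LR [7,13,10,23]) (Nd 8 (Nd 20 (LR [8,23,7,20]) (Nd 17 (LR [7,8,17,23]) (Nd 4 (LR [7,8,4,23]) (LB [13,3,14,4,17])))) (Nd 25 (Nd 21 (Nd 17 (LR [7,21,17,23]) (Nd 4 (LR [4,21,5,18]) (LB [13,3,14,4,17]))) (Nd 20 (Nd 1 (Nd 17 (LR [1,17,2,15]) (Nd 4 (LR [1,4,2,15]) (LB [13,3,14,4,17]))) (LB [1,8,21,11,24])) (LB [20,8,21,11,24]))) (LB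 [25,8,13,9,22])))) (LB [23,3,14,6,19])) (LB [7,6,19,16,22])) (LB [10,3,14,6,19])))))))"
lemma cert34_ok: "check [(12,True),(18,True),(14,False),(5,True),(15,True),(16,False),(2,True),(19,False),(6,False)] cert34" unfolding cert34_def by (simp add: validR_def validB_def GE_def)
definition cert35 :: ctree where "cert35 = (Nd 8 (Nd 24 (LR [8,24,5,18]) (Nd 11 (LR [8,11,5,18]) (Nd 9 (LR [8,9,5,18]) (Nd 22 (LR [8,22,5,18]) (Nd 17 (LR [8,17,5,18]) (Nd 4 (LR [4,8,5,18]) (Nd 7 (Nd 10 (Nd 23 (Nd 20 (LR [8,23,7,20]) (Nd 3 (LR [8,23,3,7]) (Nd 13 (LR [7,23,8,13]) (LB [13,3,20,4,12])))) (LB [23,6,19,9,14])) (LB [10,6,19,9,14])) (LB [7,6,19,16,22])))))))) (Nd 23 (Nd 21 (Nd 11 (LR [11,21,5,18]) (Nd 4 (LR [4,21,5,18]) (Nd 22 (LR [21,22,5,18]) (Nd 9 (LR [9,21,18,23]) (Nd 24 (LR [21,24,5,18]) (Nd 17 (LR [17,21,5,18]) (Nd 7 (Nd 13 (LR [7,23,13,21]) (Nd 3 (LR [21,23,3,7]) (LB [13,3,14,4,17]))) (LB [7,4,17,8,16])))))))) (Nd 10 (Nd 13 (Nd 9 (LR [9,13,10,23]) (Nd 7 (LR [7,13,10,23]) (Nd 1 (LR [1,13,10,23]) (Nd 0 (LR [0,13,10,23]) (LB [16,0,7,6,19]))))) (Nd 20 (Nd 25 (Nd 24 (LR [24,25,2,15])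 (Nd 9 (LR [9,25,2,15]) (Nd 11 (LR [11,25,2,15]) (Nd 3 (LR [3,25,2,15]) (Nd 22 (LR [22,25,2,15]) (Nd 7 (Nd 1 (Nd 17 (LR [1,17,2,15]) (Nd 4 (LR [1,4,2,15]) (LB [13,3,14,4,17]))) (LB [1,8,21,11,24])) (LB [7,6,19,16,22]))))))) (Nd 0 (Nd 24 (LR [10,24,0,20]) (Nd 11 (LR [10,11,0,20]) (LB [25,8,21,11,24]))) (LB [0,12,25,13,16]))) (Nd 0 (Nd 7 (Nd 24 (LR [10,24,0,7]) (Nd 11 (LR [10,11,0,7]) (LB [20,8,21,11,24]))) (LB [16,6,19,7,20])) (LB [16,0,20,12,19])))) (Nd 20 (Nd 3 (Nd 4 (LR [3,4,2,15]) (Nd 13 (LR [13,23,3,20]) (Nd 17 (LR [3,17,2,15]) (Nd 25 (LR [3,25,2,15]) (Nd 0 (Nd 1 (Nd 11 (LR [1,11,2,15]) (Nd 24 (LR [1,24,2,15]) (LB [25,8,21,11,24]))) (LB [1,4,17,8,21])) (LB [13,0,14,4,17])))))) (LB [10,3,14,6,19])) (LB [10,6,19,14,20])))) (Nd 20 (Nd 0 (Nd 1 (Nd 11 (LR [1,11,2,15]) (Nd 17 (LR [1,17,2,15]) (Nd 24 (LR [1,24,2,15]) (Nd 4 (LR [1,4,2,15]) (Nd 7 (Nd 3 (Nd 25 (LR [3,25,2,15]) (Nd 10 (Nd 13 (LR [10,13,1,3]) (Nd 9 (Nd 21 (LR [9,21,5,18]) (LB [25,8,21,11,24])) (LB [23,9,14,13,19])))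 (LB [14,6,19,10,23]))) (LB [23,3,14,6,19])) (LB [7,4,17,8,16])))))) (LB [23,1,14,6,19])) (LB [23,0,14,6,19])) (LB [20,6,19,16,23]))))"
lemma cert35_ok: "check [(12,False),(18,True),(14,False),(5,True),(15,True),(16,False),(2,True),(19,False),(6,False)] cert35" unfolding cert35_def by (simp add: validR_def validB_def GE_def)
definition cert36 :: ctree where "cert36 = (LB [18,6,19,14,16])"
lemma cert36_ok: "check [(18,False),(14,False),(5,True),(15,True),(16,False),(2,True),(19,False),(6,False)] cert36" unfolding cert36_def by (simp add: validR_def validB_def GE_def)
definition cert37 :: ctree where "cert37 = (Nd 7 (Nd 18 (Nd 14 (Nd 17 (LR [14,17,2,15]) (Nd 11 (LR [11,14,2,15]) (Nd 24 (LR [14,24,2,18]) (Nd 4 (LR [4,14,2,15]) (Nd 0 (Nd 20 (Nd 8 (Nd 23 (LR [8,23,7,20]) (Nd 22 (LR [8,22,7,18]) (LB [5,6,19,16,22]))) (LB [5,4,17,8,16])) (LB [16,5,20,17,19])) (LB [16,0,5,4,19])))))) (LB [5,6,19,14,16])) (LB [16,5,18,6,19])) (LB [16,5,7,6,19]))"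
lemma cert37_ok: "check [(5,False),(15,True),(16,False),(2,True),(19,False),(6,False)] cert37" unfolding cert37_def by (simp add: validR_def validB_def GE_def)
definition cert38 :: ctree where "cert38 = (Nd 9 (Nd 0 (Nd 22 (Nd 25 (LR [2,25,9,22]) (Nd 12 (LR [2,12,9,22]) (Nd 18 (Nd 8 (LR [8,18,9,22]) (Nd 21 (LR [18,21,9,22]) (Nd 3 (Nd 20 (Nd 14 (Nd 24 (LR [14,24,2,18]) (LB [15,12,25,16,24])) (LB [15,6,19,14,16])) (LB [16,6,19,15,20])) (LB [15,3,16,12,19])))) (LB [16,12,19,15,18])))) (LB [15,6,19,16,22])) (LB [16,0,15,6,19])) (LB [15,6,19,9,16]))"
lemma cert38_ok: "check [(15,False),(16,False),(2,True),(19,False),(6,False)] cert38" unfolding cert38_def by (simp add: validR_def validB_def GE_def)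
definition cert39 :: ctree where "cert39 = (Nd 4 (LR [4,15,14,16]) (Nd 17 (LR [15,17,14,16]) (Nd 1 (Nd 24 (LR [15,24,1,14]) (Nd 11 (LR [11,15,1,14]) (Nd 8 (Nd 9 (Nd 23 (LR [8,23,1,9]) (Nd 25 (LR [15,25,9,16]) (Nd 12 (LR [12,15,9,16]) (LB [2,11,24,12,25])))) (Nd 5 (Nd 12 (LR [12,16,5,15]) (Nd 22 (Nd 21 (LR [5,22,8,21]) (Nd 7 (LR [8,22,5,7]) (Nd 25 (LR [22,25,8,15]) (LB [25,2,21,9,11])))) (LB [2,6,12,9,22]))) (LB [9,2,5,6,19]))) (Nd 25 (Nd 9 (LR [15,25,9,16]) (Nd 3 (LR [15,25,3,16]) (LB [2,3,9,6,19]))) (LB [25,2,8,11,24]))))) (Nd 3 (Nd 25 (LR [15,25,3,16]) (Nd 12 (LR [12,15,3,16]) (Nd 23 (Nd 13 (LR [13,23,3,14]) (LB [1,2,13,4,17])) (LB [1,2,23,6,19])))) (LB [2,1,3,4,17])))))"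
lemma cert39_ok: "check [(15,True),(14,True),(16,True),(2,False),(19,False),(6,False)] cert39" unfolding cert39_def by (simp add: validR_def validB_def GE_def)
definition cert40 :: ctree where "cert40 = (Nd 22 (Nd 9 (Nd 1 (Nd 3 (Nd 13 (Nd 23 (LR [13,23,3,9]) (Nd 17 (LR [13,17,3,14]) (Nd 10 (LR [10,13,9,14]) (Nd 12 (LR [12,13,3,9]) (Nd 4 (LR [4,13,1,14]) (Nd 25 (LR [13,25,3,22]) (Nd 11 (Nd 20 (Nd 21 (LR [11,21,1,20]) (Nd 8 (LR [8,11,1,20]) (Nd 18 (Nd 24 (LR [14,18,11,24]) (LB [24,2,15,12,25])) (LB [18,4,17,8,21])))) (LB [20,6,19,10,23])) (LB [11,2,15,12,25])))))))) (Nd 8 (Nd 23 (LR [8,23,1,9]) (Nd 25 (LR [8,25,9,22]) (Nd 18 (LR [8,18,9,22]) (Nd 17 (LR [8,17,1,3]) (Nd 4 (LR [4,8,1,3]) (Nd 5 (LR [5,8,9,22]) (Nd 21 (Nd 7 (LR [7,22,8,21]) (Nd 24 (LR [1,24,8,21]) (Nd 11 (LR [1,11,8,21]) (LB [25,2,15,11,24])))) (LB [21,4,17,5,18])))))))) (Nd 21 (Nd 23 (LR [21,23,1,9]) (Nd 25 (LR [21,25,3,9]) (Nd 17 (LR [17,21,1,3]) (Nd 4 (LR [4,21,1,3]) (Nd 5 (LR [5,21,9,22]) (Nd 18 (LR [18,21,9,22]) (LB [8,4,17,5,18]))))))) (Nd 20 (Nd 12 (Nd 11 (LR [12,20,11,16])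 (Nd 18 (LR [12,18,9,16]) (Nd 5 (LR [5,12,9,22]) (LB [11,5,18,8,21])))) (Nd 11 (Nd 10 (LR [10,11,14,20]) (Nd 7 (Nd 17 (LR [16,17,7,20]) (Nd 4 (LR [4,16,7,20]) (Nd 18 (Nd 24 (LR [14,18,11,24]) (Nd 5 (LR [11,14,5,18]) (LB [5,8,21,17,24]))) (LB [18,4,17,8,21])))) (Nd 23 (Nd 0 (Nd 17 (LR [16,17,0,20]) (Nd 4 (LR [4,16,0,20]) (LB [7,4,17,13,21]))) (LB [10,0,7,6,19])) (LB [7,10,23,13,19])))) (Nd 25 (Nd 24 (Nd 10 (LR [10,24,1,14]) (Nd 0 (LR [0,25,16,24]) (LB [0,10,12,11,13]))) (LB [12,2,15,11,24])) (LB [11,2,15,12,25])))) (Nd 7 (Nd 11 (Nd 10 (LR [10,11,7,14]) (Nd 23 (Nd 0 (Nd 17 (LR [16,17,0,7]) (Nd 4 (LR [4,16,0,7]) (LB [20,4,17,13,21]))) (LB [10,0,20,6,13])) (LB [20,6,19,10,23]))) (Nd 24 (Nd 10 (LR [10,24,1,7]) (Nd 0 (Nd 17 (LR [16,17,0,7]) (LB [20,8,21,11,17])) (LB [10,0,20,11,13]))) (LB [20,8,21,11,24]))) (Nd 23 (Nd 17 (Nd 18 (LR [17,18,14,16]) (Nd 5 (LR [5,17,14,16]) (Nd 24 (Nd 10 (LR [10,24,1,14]) (LB [10,6,13,7,20])) (LB [24,5,18,8,21])))) (LB [17,7,20,8,21])) (LB [23,6,8,7,20]))))))) (LB [3,2,15,6,19]))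 (LB [1,2,15,6,19])) (LB [9,2,15,6,19])) (LB [22,2,15,6,19]))"
lemma cert40_ok: "check [(15,False),(14,True),(16,True),(2,False),(19,False),(6,False)] cert40" unfolding cert40_def by (simp add: validR_def validB_def GE_def)
definition cert41 :: ctree where "cert41 = (Nd 5 (Nd 22 (Nd 12 (LR [5,12,16,22]) (Nd 10 (Nd 15 (Nd 17 (LR [16,17,5,15]) (Nd 4 (LR [4,16,5,15]) (Nd 25 (LR [15,25,16,22]) (Nd 3 (Nd 18 (Nd 21 (LR [21,22,5,18]) (Nd 8 (LR [8,22,5,18]) (Nd 1 (Nd 13 (LR [10,13,1,3]) (LB [14,2,13,4,17])) (LB [2,1,14,6,17])))) (LB [14,2,18,6,17])) (LB [2,3,14,4,19]))))) (LB [14,2,15,6,19])) (LB [14,2,10,6,19]))) (LB [2,6,19,14,22])) (LB [14,2,5,6,19]))"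
lemma cert41_ok: "check [(14,False),(16,True),(2,False),(19,False),(6,False)] cert41" unfolding cert41_def by (simp add: validR_def validB_def GE_def)
definition cert42 :: ctree where "cert42 = (Nd 14 (Nd 7 (Nd 9 (Nd 3 (Nd 15 (Nd 17 (LR [15,17,3,14]) (Nd 12 (LR [12,15,3,9]) (Nd 4 (LR [4,15,3,14]) (Nd 25 (LR [15,25,3,9]) (Nd 22 (Nd 0 (Nd 20 (Nd 18 (Nd 8 (LR [8,22,7,18]) (Nd 21 (LR [21,22,7,18]) (Nd 24 (LR [14,24,15,18]) (LB [2,12,25,16,24])))) (LB [16,2,18,4,19])) (LB [16,2,20,4,12])) (LB [16,0,2,4,6])) (LB [2,12,25,16,22])))))) (LB [16,2,15,6,19])) (LB [2,3,16,6,19])) (LB [2,6,19,9,16])) (LB [16,2,7,6,19])) (LB [2,6,19,14,16]))"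
lemma cert42_ok: "check [(16,False),(2,False),(19,False),(6,False)] cert42" unfolding cert42_def by (simp add: validR_def validB_def GE_def)
definition cert :: ctree where "cert = (Nd 6 (Nd 16 (Nd 2 cert0 (Nd 15 cert1 (Nd 19 (Nd 20 cert2 (Nd 0 cert3 (Nd 18 cert4 (Nd 5 cert5 (Nd 7 cert6 (Nd 11 cert7 cert8)))))) cert9))) (Nd 2 (Nd 14 cert10 (Nd 1 cert11 (Nd 3 cert12 (Nd 9 cert13 (Nd 19 (Nd 22 cert14 (Nd 13 cert15 cert16)) cert17))))) (Nd 15 cert18 (Nd 19 (Nd 12 (Nd 23 cert19 (Nd 10 cert20 cert21)) cert22) cert23)))) (Nd 19 (Nd 16 cert24 (Nd 2 cert25 cert26)) (Nd 2 (Nd 16 (Nd 12 cert27 (Nd 4 cert28 (Nd 17 cert29 (Nd 14 (Nd 8 cert30 cert31) cert32)))) (Nd 15 (Nd 5 (Nd 14 cert33 (Nd 18 (Nd 12 cert34 cert35) cert36)) cert37) cert38)) (Nd 16 (Nd 14 (Nd 15 cert39 cert40) cert41) cert42))))"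
lemma cert_ok: "check [] cert" unfolding cert_def using cert0_ok cert1_ok cert2_ok cert3_ok cert4_ok cert5_ok cert6_ok cert7_ok cert8_ok cert9_ok cert10_ok cert11_ok cert12_ok cert13_ok cert14_ok cert15_ok cert16_ok cert17_ok cert18_ok cert19_ok cert20_ok cert21_ok cert22_ok cert23_ok cert24_ok cert25_ok cert26_ok cert27_ok cert28_ok cert29_ok cert30_ok cert31_ok cert32_ok cert33_ok cert34_ok cert35_ok cert36_ok cert37_ok cert38_ok cert39_ok cert40_ok cert41_ok cert42_ok by simp
theorem mainTheorem13:
  shows "\<exists>(V :: nat set) E. simple_graph V E \<and> card V = 26 \<and> Kk_free 4 V E \<and>
     (\<forall>R B. R \<union> B = V \<and> R \<inter> B = {} \<longrightarrow>
        contains_on E R (tripartite_V 1 1 2) (tripartite_E 1 1 2) \<or>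
        contains_on E B (tripartite_V 1 2 2) (tripartite_E 1 2 2))"
proof (intro exI conjI allI impI)
  show "simple_graph {0..<26} GE"
    unfolding simple_graph_def using GE_sym GE_irr GE_V by auto
  show "card {0..<26::nat} = 26" by simp
  show "Kk_free 4 {0..<26} GE"
  proof (unfold Kk_free_def contains_on_def, rule notI, elim exE conjE)
    fix f assume inj: "inj_on f (complete_V 4)"
      and ed: "\<forall>u\<in>complete_V 4. \<forall>v\<in>complete_V 4. complete_E u v \<longrightarrow> GE (f u) (f v)"
    have c: "complete_V 4 = {0,1,2,3}" by (auto simp: complete_V_def)
    have "GE (f 0) (f 1)" "GE (f 0) (f 2)" "GE (f 0) (f 3)" "GE (f 1) (f 2)" "GE (f 1) (f 3)" "GE (f 2) (f 3)"
      using ed by (auto simp: c complete_E_def)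
    then show False using no_K4 by blast
  qed
  fix R B assume "R \<union> B = {0..<26::nat} \<and> R \<inter> B = {}"
  then show "contains_on GE R (tripartite_V 1 1 2) (tripartite_E 1 1 2) \<or>
        contains_on GE B (tripartite_V 1 2 2) (tripartite_E 1 2 2)"
    using check_sound[OF cert_ok] by auto
qed

end
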